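(* Let $\Omega\subseteq\mathbb{R}^2$ be a compact domain, $r_d>0$, $a_I>0$, $a_h>0$, $a_v>0$, and let $c_r>0$ be a collision radius. Consider $N$ vehicles with dynamics $\dot p_i=v_i$, $\dot v_i=u_i$ and control law (applied without thresholding) $$u_i=-\sum_{j\neq i}\nabla_i V_I(p_{ij})-\nabla_i V_h(p_i)-a_v v_i.$$ Let $$\Phi=\frac12\sum_{i=1}^N\Bigl(\dot p_i\cdot\dot p_i+\sum_{j\ne i}V_I(p_{ij})+2V_h(p_i)\Bigr).$$ Suppose that for some nonnegative integer $k$, $$\Phi(0)<(k+1)\int_{r_d}^{c_r}f_I(s)\,ds.$$ Then for all $t\ge0$, at most $k$ distinct pairs of vehicles are unsafe at time $t$ (i.e., satisfy $\|p_i(t)-p_j(t)\|\le c_r$); in particular $k=0$ guarantees that no pair is ever unsafe.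
   Context: $p_{ij}:=p_i-p_j$; the signed distance of $x$ from $\partial\Omega$ is positive outside $\Omega$, negative inside. $f_I(r)=a_I(r-r_d)$ for $0\le r<r_d$ and $f_I(r)=0$ for $r\ge r_d$. $V_I(x)=\frac{a_I}{2}(\|x\|-r_d)^2$ for $\|x\|<r_d$, $V_I(x)=0$ otherwise; $V_h(x)=0$ if the signed distance of $x$ to $\partial\Omega$ is $\le -\frac{r_d}{2}$ and $V_h(x)=\frac{a_h}{2}(\text{signed distance}+\frac{r_d}{2})^2$ otherwise. A pair $(i,j)$ is unsafe at time $t$ if $\|p_i(t)-p_j(t)\|\le c_r$. *)

theory Defs
  imports "HOL-Analysis.Analysis"
begin

definition f_I :: "real \<Rightarrow> real \<Rightarrow> real \<Rightarrow> real" where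
  "f_I aI rd r = (if 0 \<le> r \<and> r < rd then aI * (r - rd) else 0)"

definition V_I :: "real \<Rightarrow> real \<Rightarrow> real^2 \<Rightarrow> real" where
  "V_I aI rd x = (if norm x < rd then aI / 2 * (norm x - rd)\<^sup>2 else 0)"

definition signed_dist :: "(real^2) set \<Rightarrow> real^2 \<Rightarrow> real" where
  "signed_dist \<Omega> x = (if x \<in> \<Omega> then - infdist x (frontier \<Omega>) else infdist x (frontier \<Omega>))"

definition V_h :: "(real^2) set \<Rightarrow> real \<Rightarrow> real \<Rightarrow> real^2 \<Rightarrow> real" where
  "V_h \<Omega> ah rd x = (if signed_dist \<Omega> x \<le> - rd / 2 then 0
                      else ah / 2 * (signed_dist \<Omega> x + rd / 2)\<^sup>2)"

definition Phi :: "(real^2) set \<Rightarrow> real \<Rightarrow> real \<Rightarrow> real \<Rightarrow> nat \<Rightarrow>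
    (nat \<Rightarrow> real \<Rightarrow> real^2) \<Rightarrow> (nat \<Rightarrow> real \<Rightarrow> real^2) \<Rightarrow> real \<Rightarrow> real" where
  "Phi \<Omega> rd aI ah N p v t = 1/2 * (\<Sum>i<N. v i t \<bullet> v i t
      + (\<Sum>j\<in>{..<N} - {i}. V_I aI rd (p i t - p j t)) + 2 * V_h \<Omega> ah rd (p i t))"

definition unsafe_pairs :: "real \<Rightarrow> nat \<Rightarrow> (nat \<Rightarrow> real \<Rightarrow> real^2) \<Rightarrow> real \<Rightarrow> (nat \<times> nat) set" where
  "unsafe_pairs cr N p t = {(i, j). i < j \<and> j < N \<and> norm (p i t - p j t) \<le> cr}"

end

theory Submission
  imports Defs
begin

lemma L1:
  fixes w :: "real^2"
  assumes "(f has_vector_derivative w) (at t within S)"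
  shows "((\<lambda>t. f t \<bullet> f t) has_real_derivative 2 * (f t \<bullet> w)) (at t within S)"
proof -
  have h: "(f has_derivative (\<lambda>h. h *\<^sub>R w)) (at t within S)"
    using assms by (simp add: has_vector_derivative_def)
  have "((\<lambda>t. f t \<bullet> f t) has_derivative (\<lambda>h. f t \<bullet> (h *\<^sub>R w) + (h *\<^sub>R w) \<bullet> f t)) (at t within S)"
    by (rule has_derivative_inner[OF h h])
  moreover have "(\<lambda>h. f t \<bullet> (h *\<^sub>R w) + (h *\<^sub>R w) \<bullet> f t) = (*) (2 * (f t \<bullet> w))"
    by (auto simp: fun_eq_iff inner_commute algebra_simps)
  ultimately show ?thesis by (simp add: has_field_derivative_def)
qed

lemma L2:
  fixes w g :: "real^2"
  assumes "GDERIV V (f t) :> g" and "(f has_vector_derivative w) (at t within S)"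
  shows "((\<lambda>t. V (f t)) has_real_derivative (g \<bullet> w)) (at t within S)"
proof -
  have h: "(f has_derivative (\<lambda>h. h *\<^sub>R w)) (at t within S)"
    using assms by (simp add: has_vector_derivative_def)
  have g: "(V has_derivative (\<lambda>h. h \<bullet> g)) (at (f t))" using assms(1) by (simp add: gderiv_def)
  have "((\<lambda>t. V (f t)) has_derivative (\<lambda>h. (h *\<^sub>R w) \<bullet> g)) (at t within S)"
    by (rule has_derivative_compose[OF h g])
  moreover have "(\<lambda>h. (h *\<^sub>R w) \<bullet> g) = (*) (g \<bullet> w)"
    by (auto simp: fun_eq_iff inner_commute algebra_simps)
  ultimately show ?thesis by (simp add: has_field_derivative_def)
qed

lemma V_I_odd_grad:
  assumes "GDERIV (V_I aI rd) x :> g1" and "GDERIV (V_I aI rd) (-x) :> g2"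
  shows "g2 = - g1"
proof -
  have a: "(V_I aI rd has_derivative (\<lambda>h. h \<bullet> g2)) (at (-x))" using assms(2) by (simp add: gderiv_def)
  have m: "(uminus has_derivative uminus) (at x)" by (rule has_derivative_minus[OF has_derivative_ident])
  have "((\<lambda>y. V_I aI rd (- y)) has_derivative (\<lambda>h. (-h) \<bullet> g2)) (at x)"
    by (rule has_derivative_compose[OF m, simplified, OF a])
  moreover have "(\<lambda>y. V_I aI rd (- y)) = V_I aI rd" by (simp add: fun_eq_iff V_I_def)
  ultimately have b: "(V_I aI rd has_derivative (\<lambda>h. (-h) \<bullet> g2)) (at x)" by simp
  have c: "(V_I aI rd has_derivative (\<lambda>h. h \<bullet> g1)) (at x)" using assms(1) by (simp add: gderiv_def)
  have "(\<lambda>h. (-h) \<bullet> g2) = (\<lambda>h. h \<bullet> g1)" by (rule has_derivative_unique[OF b c])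
  hence "(-(g1+g2)) \<bullet> g2 = (g1+g2) \<bullet> g1" by (metis)
  hence "(g1+g2) \<bullet> (g1+g2) = 0" by (simp add: algebra_simps inner_commute)
  hence "g1 + g2 = 0" by simp
  thus ?thesis by (simp add: eq_neg_iff_add_eq_0 add.commute)
qed

lemma swap_sum:
  fixes F :: "nat \<Rightarrow> nat \<Rightarrow> real"
  shows "(\<Sum>i<N. \<Sum>j\<in>{..<N} - {i}. F i j) = (\<Sum>i<N. \<Sum>j\<in>{..<N} - {i}. F j i)"
proof -
  have e: "\<And>G :: nat \<Rightarrow> nat \<Rightarrow> real. (\<Sum>i<N. \<Sum>j\<in>{..<N} - {i}. G i j) = (\<Sum>i<N. \<Sum>j<N. if j = i then 0 else G i j)"
  proof -
    fix G :: "nat \<Rightarrow> nat \<Rightarrow> real"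
    show "(\<Sum>i<N. \<Sum>j\<in>{..<N} - {i}. G i j) = (\<Sum>i<N. \<Sum>j<N. if j = i then 0 else G i j)"
      proof (rule sum.cong[OF refl])
      fix i
      have "{..<N} - {i} = {j\<in>{..<N}. j \<noteq> i}" by auto
      then show "(\<Sum>j\<in>{..<N} - {i}. G i j) = (\<Sum>j<N. if j = i then 0 else G i j)"
        using sum.inter_filter[OF finite_lessThan, of "\<lambda>j. G i j" N "\<lambda>j. j \<noteq> i"]
        by (simp add: if_distrib) (metis (no_types, lifting))
    qed
  qed
  show ?thesis unfolding e by (subst sum.swap) (rule sum.cong[OF refl], rule sum.cong[OF refl], auto)
qed

lemma integral_val:
  assumes "rd > 0" "cr > 0"
  shows "(LBINT s=rd..cr. f_I aI rd s) = (if cr < rd then aI / 2 * (cr - rd)\<^sup>2 else 0)"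
proof (cases "cr < rd")
  case True
  have "(LBINT s=cr..rd. f_I aI rd s) = (LBINT s=cr..rd. aI * (s - rd))"
    using True assms by (intro interval_integral_cong) (auto simp: f_I_def einterval_def)
  also have "\<dots> = aI / 2 * (rd - rd)\<^sup>2 - aI / 2 * (cr - rd)\<^sup>2"
  proof (rule interval_integral_FTC_finite)
    show "continuous_on {min cr rd..max cr rd} (\<lambda>s. aI * (s - rd))" by (intro continuous_intros)
    fix x assume "min cr rd \<le> x" "x \<le> max cr rd"
    show "((\<lambda>s. aI / 2 * (s - rd)\<^sup>2) has_vector_derivative aI * (x - rd)) (at x within {min cr rd..max cr rd})"
      unfolding has_real_derivative_iff_has_vector_derivative[symmetric]
      by (auto intro!: derivative_eq_intros simp: power2_eq_square algebra_simps)
  qed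
  finally show ?thesis using True by (subst interval_integral_endpoints_reverse) simp
next
  case False
  have "(LBINT s=rd..cr. f_I aI rd s) = (LBINT s=rd..cr. 0)"
    using False assms by (intro interval_integral_cong) (auto simp: f_I_def einterval_def)
  thus ?thesis using False by simp
qed

theorem proposition4:
  fixes \<Omega> :: "(real^2) set"
    and rd aI ah av cr :: real
    and N k :: nat
    and p v :: "nat \<Rightarrow> real \<Rightarrow> real^2"
    and gI gh :: "real^2 \<Rightarrow> real^2"
  assumes "compact \<Omega>" and "connected (interior \<Omega>)" and "interior \<Omega> \<noteq> {}"
    and "rd > 0" and "aI > 0" and "ah > 0" and "av > 0" and "cr > 0"
    \<comment> \<open>gI and gh are the gradients of V_I and V_h wherever the control law evaluates them\<close>
    and gradI: "\<And>t i j. t \<ge> 0 \<Longrightarrow> i < N \<Longrightarrow> j < N \<Longrightarrow> i \<noteq> j \<Longrightarrow>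
                 GDERIV (V_I aI rd) (p i t - p j t) :> gI (p i t - p j t)"
    and gradh: "\<And>t i. t \<ge> 0 \<Longrightarrow> i < N \<Longrightarrow> GDERIV (V_h \<Omega> ah rd) (p i t) :> gh (p i t)"
    \<comment> \<open>dynamics: p_i' = v_i, v_i' = u_i with the control law\<close>
    and dp: "\<And>t i. t \<ge> 0 \<Longrightarrow> i < N \<Longrightarrow> (p i has_vector_derivative v i t) (at t within {0..})"
    and dv: "\<And>t i. t \<ge> 0 \<Longrightarrow> i < N \<Longrightarrow>
              (v i has_vector_derivative
                 (- (\<Sum>j\<in>{..<N} - {i}. gI (p i t - p j t)) - gh (p i t) - av *\<^sub>R v i t))
              (at t within {0..})"
    and init: "Phi \<Omega> rd aI ah N p v 0 < real (k + 1) * (LBINT s=rd..cr. f_I aI rd s)"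
  shows "\<forall>t\<ge>0. card (unsafe_pairs cr N p t) \<le> k"
proof -
  note t0 = \<open>av > 0\<close>
  define U where "U = (\<lambda>i t. - (\<Sum>j\<in>{..<N} - {i}. gI (p i t - p j t)) - gh (p i t) - av *\<^sub>R v i t)"
  define PH where "PH = Phi \<Omega> rd aI ah N p v"
  have der: "(PH has_real_derivative (- av * (\<Sum>i<N. v i t \<bullet> v i t))) (at t within {0..})"
    if t: "t \<ge> 0" for t
  proof -
    have d1: "((\<lambda>t. v i t \<bullet> v i t) has_real_derivative 2 * (v i t \<bullet> U i t)) (at t within {0..})"
      if "i < N" for i
      using L1[OF dv[OF t that]] unfolding U_def .
    have d2: "((\<lambda>t. V_I aI rd (p i t - p j t)) has_real_derivative
                gI (p i t - p j t) \<bullet> (v i t - v j t)) (at t within {0..})"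
      if "i < N" "j \<in> {..<N} - {i}" for i j
    proof -
      have "((\<lambda>t. p i t - p j t) has_vector_derivative (v i t - v j t)) (at t within {0..})"
        using that by (intro has_vector_derivative_diff dp t) auto
      moreover have "GDERIV (V_I aI rd) (p i t - p j t) :> gI (p i t - p j t)"
        using that by (intro gradI t) auto
      ultimately show ?thesis using L2[where f = "\<lambda>t. p i t - p j t"] by blast
    qed
    have d3: "((\<lambda>t. V_h \<Omega> ah rd (p i t)) has_real_derivative gh (p i t) \<bullet> v i t) (at t within {0..})"
      if "i < N" for i
      using L2[where f = "p i", OF gradh[OF t that] dp[OF t that]] .
    have D: "(PH has_real_derivative 1/2 * (\<Sum>i<N. 2 * (v i t \<bullet> U i t)
          + (\<Sum>j\<in>{..<N} - {i}. gI (p i t - p j t) \<bullet> (v i t - v j t)) + 2 * (gh (p i t) \<bullet> v i t)))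
          (at t within {0..})"
      unfolding PH_def Phi_def
      by (intro DERIV_cmult DERIV_sum DERIV_add d1 d2 d3) auto
    define a where "a = (\<lambda>i. \<Sum>j\<in>{..<N} - {i}. gI (p i t - p j t) \<bullet> v i t)"
    define b where "b = (\<lambda>i. \<Sum>j\<in>{..<N} - {i}. gI (p i t - p j t) \<bullet> v j t)"
    have odd: "gI (p j t - p i t) = - gI (p i t - p j t)" if "i < N" "j \<in> {..<N} - {i}" for i j
    proof -
      have "GDERIV (V_I aI rd) (p i t - p j t) :> gI (p i t - p j t)"
        using that by (intro gradI t) auto
      moreover have "GDERIV (V_I aI rd) (- (p i t - p j t)) :> gI (p j t - p i t)"
        using that gradI[OF t, of j i] by auto
      ultimately show ?thesis by (rule V_I_odd_grad)
    qed
    have sb: "(\<Sum>i<N. b i) = - (\<Sum>i<N. a i)"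
    proof -
      have "(\<Sum>i<N. b i) = (\<Sum>i<N. \<Sum>j\<in>{..<N} - {i}. gI (p j t - p i t) \<bullet> v i t)"
        unfolding b_def by (rule swap_sum)
      also have "\<dots> = (\<Sum>i<N. \<Sum>j\<in>{..<N} - {i}. - (gI (p i t - p j t) \<bullet> v i t))"
      proof (rule sum.cong[OF refl], rule sum.cong[OF refl])
        fix i j assume "i \<in> {..<N}" "j \<in> {..<N} - {i}"
        then show "gI (p j t - p i t) \<bullet> v i t = - (gI (p i t - p j t) \<bullet> v i t)"
          using odd[of i j] by simp
      qed
      also have "\<dots> = - (\<Sum>i<N. a i)" unfolding a_def by (simp add: sum_negf)
      finally show ?thesis .
    qed
    have trm: "2 * (v i t \<bullet> U i t)
          + (\<Sum>j\<in>{..<N} - {i}. gI (p i t - p j t) \<bullet> (v i t - v j t)) + 2 * (gh (p i t) \<bullet> v i t)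
          = - a i - b i - 2 * av * (v i t \<bullet> v i t)" for i
      unfolding U_def a_def b_def
      by (simp add: inner_diff_right inner_sum_right inner_commute sum_subtractf algebra_simps)
    have "1/2 * (\<Sum>i<N. 2 * (v i t \<bullet> U i t)
          + (\<Sum>j\<in>{..<N} - {i}. gI (p i t - p j t) \<bullet> (v i t - v j t)) + 2 * (gh (p i t) \<bullet> v i t))
        = 1/2 * (\<Sum>i<N. - a i - b i - 2 * av * (v i t \<bullet> v i t))"
      by (simp only: trm)
    also have "\<dots> = - av * (\<Sum>i<N. v i t \<bullet> v i t)"
      using sb by (simp add: sum.distrib sum_subtractf sum_distrib_left sum_negf)
    finally show ?thesis using D by simp
  qed
  have nn: "0 \<le> (\<Sum>i<N. v i t \<bullet> v i t)" for t by (intro sum_nonneg) simp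
  have mono: "PH t \<le> PH 0" if t: "t \<ge> 0" for t
  proof (cases "t = 0")
    case True then show ?thesis by simp
  next
    case False
    with t have tp: "0 < t" by simp
    have "continuous_on {0..t} PH"
    proof -
      have "continuous (at x within {0..}) PH" if "x \<in> {0..t}" for x
        using der[of x] that by (auto intro: DERIV_continuous)
      moreover have "{0..t} \<subseteq> {0::real..}" by auto
      ultimately show ?thesis
        unfolding continuous_on_eq_continuous_within using continuous_within_subset by blast
    qed
    moreover have "PH differentiable (at x)" if "0 < x" "x < t" for x
    proof -
      have e: "at x within {0..} = at x" by (rule at_within_interior) (use that in simp)
      have "(PH has_real_derivative (- av * (\<Sum>i<N. v i x \<bullet> v i x))) (at x)"
        using der[of x] that unfolding e by simp
      then show ?thesis unfolding real_differentiable_def by blast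
    qed
    ultimately obtain l z where z: "0 < z" "z < t" "DERIV PH z :> l" "PH t - PH 0 = (t - 0) * l"
      using MVT[OF tp] by blast
    have e: "at z within {0..} = at z" by (rule at_within_interior) (use z in simp)
    have "(PH has_real_derivative (- av * (\<Sum>i<N. v i z \<bullet> v i z))) (at z)"
      using der[of z] z unfolding e by simp
    then have "l = - av * (\<Sum>i<N. v i z \<bullet> v i z)" using z(3) DERIV_unique by blast
    then have "l \<le> 0" using nn[of z] t0 by (simp add: mult_nonneg_nonneg)
    then have "t * l \<le> 0" using tp by (simp add: mult_nonneg_nonpos)
    then show ?thesis using z(4) by simp
  qed
  define c where "c = (LBINT s=rd..cr. f_I aI rd s)"
  have cval: "c = (if cr < rd then aI / 2 * (cr - rd)\<^sup>2 else 0)"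
    unfolding c_def using integral_val \<open>rd > 0\<close> \<open>cr > 0\<close> by blast
  have c0: "c \<ge> 0" using cval \<open>aI > 0\<close> by auto
  have VIc: "V_I aI rd x \<ge> c" if "norm x \<le> cr" for x
  proof (cases "cr < rd")
    case True
    then have "(cr - rd)\<^sup>2 \<le> (norm x - rd)\<^sup>2"
    proof -
      have "(rd - cr)\<^sup>2 \<le> (rd - norm x)\<^sup>2"
        using that True by (intro power_mono) auto
      then show ?thesis by (simp add: power2_commute)
    qed
    then show ?thesis using True that cval \<open>aI > 0\<close> by (auto simp: V_I_def)
  next
    case False
    then show ?thesis using cval \<open>aI > 0\<close> by (auto simp: V_I_def)
  qed
  have VI0: "V_I aI rd x \<ge> 0" for x using \<open>aI > 0\<close> by (auto simp: V_I_def)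
  show ?thesis
  proof (intro allI impI)
    fix t :: real assume t: "t \<ge> 0"
    define Us where "Us = unsafe_pairs cr N p t"
    define S where "S = Sigma {..<N} (\<lambda>i. {..<N} - {i})"
    define h where "h = (\<lambda>(i, j). V_I aI rd (p i t - p j t))"
    have fS: "finite S" unfolding S_def by auto
    have US: "Us \<subseteq> S" "prod.swap ` Us \<subseteq> S" "Us \<inter> prod.swap ` Us = {}"
      unfolding Us_def S_def unsafe_pairs_def by auto
    have fU: "finite Us" using US(1) fS finite_subset by blast
    have hU: "h x \<ge> c" if "x \<in> Us" for x
      using that VIc unfolding Us_def unsafe_pairs_def h_def by auto
    have hsw: "h (prod.swap x) = h x" for x
      unfolding h_def by (cases x) (simp add: V_I_def norm_minus_commute)
    have "(\<Sum>i<N. \<Sum>j\<in>{..<N} - {i}. V_I aI rd (p i t - p j t)) = sum h S"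
      unfolding S_def h_def by (subst sum.Sigma) auto
    also have "\<dots> \<ge> sum h (Us \<union> prod.swap ` Us)"
      using US fS by (intro sum_mono2) (auto simp: h_def VI0)
    also have "sum h (Us \<union> prod.swap ` Us) = sum h Us + sum h (prod.swap ` Us)"
      using US fU by (intro sum.union_disjoint) auto
    also have "sum h (prod.swap ` Us) = sum h Us"
      by (subst sum.reindex) (auto simp: hsw)
    finally have big0: "(\<Sum>i<N. \<Sum>j\<in>{..<N} - {i}. V_I aI rd (p i t - p j t)) \<ge> sum h Us + sum h Us" .
    have "sum h Us \<ge> real (card Us) * c"
      using hU sum_bounded_below[of Us c h] by auto
    with big0 have big: "(\<Sum>i<N. \<Sum>j\<in>{..<N} - {i}. V_I aI rd (p i t - p j t)) \<ge> 2 * (real (card Us) * c)"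
      by linarith
    have vh: "V_h \<Omega> ah rd x \<ge> 0" for x using \<open>ah > 0\<close> by (auto simp: V_h_def)
    have "PH t \<ge> 1/2 * (\<Sum>i<N. \<Sum>j\<in>{..<N} - {i}. V_I aI rd (p i t - p j t))"
      unfolding PH_def Phi_def sum.distrib
      using sum_nonneg[of "{..<N}" "\<lambda>i. v i t \<bullet> v i t"] sum_nonneg[of "{..<N}" "\<lambda>i. 2 * V_h \<Omega> ah rd (p i t)"] vh
      by (simp add: sum.distrib)
    then have "PH t \<ge> real (card Us) * c" using big by linarith
    moreover have "PH t < real (k + 1) * c" using mono[OF t] init unfolding PH_def c_def by linarith
    ultimately have "real (card Us) * c < real (k + 1) * c" by linarith
    then have "real (card Us) < real (k + 1)" using c0
      by (metis mult_right_mono not_less)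
    then show "card (unsafe_pairs cr N p t) \<le> k" unfolding Us_def by simp
  qed
qed

end
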